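(* Fix integers $q\ge 1$ and $k\ge 5$, and let $G(q,k)$ be the graph on vertex set $\{v_0,v_1,\ldots,v_{kq}\}$ in which, with all indices taken modulo $kq+1$, the neighbourhood of $v_i$ is $$\{v_{i-1},v_{i+1}\}\cup\{v_{i+kj+m} : m=2,3,\ldots,k-1,\ j=0,1,\ldots,q-1\}.$$ Then $G(q,k)$ is $C_5$-free.
   Context: $C_5$ is the cycle on five vertices. A graph is $H$-free if it contains no induced subgraph isomorphic to $H$. *)

theory Defs
  imports Main
begin

definition has_induced_C5 :: "'a set \<Rightarrow> ('a \<Rightarrow> 'a \<Rightarrow> bool) \<Rightarrow> bool" where
  "has_induced_C5 V E \<longleftrightarrow>
     (\<exists>f :: nat \<Rightarrow> 'a. inj_on f {0..<5} \<and> f ` {0..<5} \<subseteq> V \<and>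
        (\<forall>i<5. \<forall>j<5. i \<noteq> j \<longrightarrow>
            (E (f i) (f j) \<longleftrightarrow> (j = (i + 1) mod 5 \<or> i = (j + 1) mod 5))))"

definition C5_free :: "'a set \<Rightarrow> ('a \<Rightarrow> 'a \<Rightarrow> bool) \<Rightarrow> bool" where
  "C5_free V E \<longleftrightarrow> \<not> has_induced_C5 V E"

text \<open>The graph G(q,k): vertex v_i is represented by the integer i, 0 \<le> i \<le> kq.\<close>
definition G_verts :: "int \<Rightarrow> int \<Rightarrow> int set" where
  "G_verts q k = {0 .. k * q}"

definition G_adj :: "int \<Rightarrow> int \<Rightarrow> int \<Rightarrow> int \<Rightarrow> bool" where
  "G_adj q k u v \<longleftrightarrow>
     (v = (u - 1) mod (k * q + 1) \<or> v = (u + 1) mod (k * q + 1) \<or>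
      (\<exists>m j. 2 \<le> m \<and> m \<le> k - 1 \<and> 0 \<le> j \<and> j \<le> q - 1 \<and>
             v = (u + k * j + m) mod (k * q + 1)))"

end

theory Submission
  imports Defs
begin

lemma dvd_small_zero:
  fixes n a :: int
  assumes "n dvd a" "\<bar>a\<bar> < n"
  shows "a = 0"
proof (rule ccontr)
  assume "a \<noteq> 0"
  from dvd_imp_le_int[OF this assms(1)] show False using assms(2) by linarith
qed

lemma resid:
  fixes q k r :: int
  assumes q: "q \<ge> 1" and k: "k \<ge> 5" and r: "0 < r" "r < k*q+1"
  shows "(r = k*q \<or> r = 1 \<or> (\<exists>m j. 2\<le>m \<and> m\<le>k-1 \<and> 0\<le>j \<and> j\<le>q-1 \<and> r = k*j+m))
         \<longleftrightarrow> \<not>(\<exists>j. 1\<le>j \<and> j\<le>q-1 \<and> (r = k*j \<or> r = k*j+1))"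
proof -
  define j0 where "j0 = r div k"
  define m0 where "m0 = r mod k"
  have r0: "r = k*j0 + m0" unfolding j0_def m0_def by simp
  have m0: "0 \<le> m0" "m0 < k" unfolding m0_def using k by auto
  have uniq: "j = j0 \<and> m = m0" if "r = k*j+m" "0\<le>m" "m<k" for j m
  proof -
    have "(k*j+m) div k = j" using that k by simp
    moreover have "(k*j+m) mod k = m" using that k by simp
    ultimately show ?thesis using that unfolding j0_def m0_def by simp
  qed
  have j0: "0 \<le> j0" unfolding j0_def using r k by (simp add: pos_imp_zdiv_nonneg_iff)
  show ?thesis
  proof
    assume S: "r = k*q \<or> r = 1 \<or> (\<exists>m j. 2\<le>m \<and> m\<le>k-1 \<and> 0\<le>j \<and> j\<le>q-1 \<and> r = k*j+m)"
    show "\<not>(\<exists>j. 1\<le>j \<and> j\<le>q-1 \<and> (r = k*j \<or> r = k*j+1))"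
    proof
      assume "\<exists>j. 1\<le>j \<and> j\<le>q-1 \<and> (r = k*j \<or> r = k*j+1)"
      then obtain j where j: "1\<le>j" "j\<le>q-1" and "r = k*j+0 \<or> r = k*j+1" by auto
      then have jm: "j = j0 \<and> (m0 = 0 \<or> m0 = 1)" using uniq k by fastforce
      from S show False
      proof (elim disjE exE conjE)
        assume "r = k*q"
        then have "q = j0 \<and> 0 = m0" using uniq[of q 0] k by simp
        then show False using jm j by simp
      next
        assume "r = 1"
        then have "0 = j0 \<and> 1 = m0" using uniq[of 0 1] k by simp
        then show False using jm j by simp
      next
        fix m j' assume "2\<le>m" "m\<le>k-1" "r = k*j'+m"
        then have "m = m0" using uniq[of j' m] by simp
        then show False using jm \<open>2\<le>m\<close> by simp
      qed
    qed
  next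
    assume D: "\<not>(\<exists>j. 1\<le>j \<and> j\<le>q-1 \<and> (r = k*j \<or> r = k*j+1))"
    show "r = k*q \<or> r = 1 \<or> (\<exists>m j. 2\<le>m \<and> m\<le>k-1 \<and> 0\<le>j \<and> j\<le>q-1 \<and> r = k*j+m)"
    proof (cases "m0 \<ge> 2")
      case True
      have "k*j0 < k*q" using r0 r m0 True by linarith
      then have "j0 < q" using k by simp
      then show ?thesis using True m0 j0 r0 by force
    next
      case False
      then have "m0 = 0 \<or> m0 = 1" using m0 by linarith
      then show ?thesis
      proof
        assume "m0 = 0"
        then have "k*j0 \<le> k*q" using r0 r by linarith
        then have "j0 \<le> q" using k by simp
        moreover have "j0 \<noteq> 0" using r0 r \<open>m0 = 0\<close> by auto
        then have "j0 \<ge> 1" using j0 by linarith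
        ultimately have "j0 = q" using D r0 \<open>m0 = 0\<close> by force
        then show ?thesis using r0 \<open>m0 = 0\<close> by simp
      next
        assume "m0 = 1"
        then have "k*j0 < k*q" using r0 r by linarith
        then have "j0 < q" using k by simp
        then have "j0 = 0" using D r0 \<open>m0 = 1\<close> j0 by force
        then show ?thesis using r0 \<open>m0 = 1\<close> by simp
      qed
    qed
  qed
qed

lemma dstep:
  fixes q k d :: int
  assumes q: "q \<ge> 1" and k: "k \<ge> 5"
  shows "(\<exists>j. 1\<le>j \<and> j\<le>q-1 \<and> (d mod (k*q+1) = k*j \<or> d mod (k*q+1) = k*j+1))
     \<longleftrightarrow> (\<exists>s. s \<noteq> 0 \<and> \<bar>s\<bar> \<le> q-1 \<and> (k*q+1) dvd (d - k*s))"
proof -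
  define n where "n = k*q+1"
  have dm: "d = n*(d div n) + d mod n" by simp
  show ?thesis unfolding n_def[symmetric]
  proof
    assume "\<exists>j. 1\<le>j \<and> j\<le>q-1 \<and> (d mod n = k*j \<or> d mod n = k*j+1)"
    then obtain j where j: "1\<le>j" "j\<le>q-1" and dj: "d mod n = k*j \<or> d mod n = k*j+1" by auto
    from dj show "\<exists>s. s \<noteq> 0 \<and> \<bar>s\<bar> \<le> q-1 \<and> n dvd (d - k*s)"
    proof
      assume "d mod n = k*j"
      then have "d - k*j = n*(d div n)" using dm by linarith
      then show ?thesis using j by (intro exI[of _ j]) auto
    next
      assume "d mod n = k*j+1"
      then have "d - k*(j-q) = n*(d div n + 1)" using dm unfolding n_def by (simp add: algebra_simps)
      then show ?thesis using j by (intro exI[of _ "j-q"]) auto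
    qed
  next
    assume "\<exists>s. s \<noteq> 0 \<and> \<bar>s\<bar> \<le> q-1 \<and> n dvd (d - k*s)"
    then obtain s where s: "s \<noteq> 0" "\<bar>s\<bar> \<le> q-1" and dv: "n dvd (d - k*s)" by auto
    have e: "d mod n = (k*s) mod n" using dv by (simp add: mod_eq_dvd_iff)
    show "\<exists>j. 1\<le>j \<and> j\<le>q-1 \<and> (d mod n = k*j \<or> d mod n = k*j+1)"
    proof (cases "s > 0")
      case True
      have "k*s \<le> k*(q-1)" using s True k by (intro mult_left_mono) auto
      then have "(k*s) mod n = k*s" unfolding n_def using True k
        by (intro mod_pos_pos_trivial) (auto simp: algebra_simps)
      then show ?thesis using e s True by (intro exI[of _ s]) auto
    next
      case False
      then have sn: "s < 0" using s by simp
      have "k*(-s) \<le> k*(q-1)" using s sn k by (intro mult_left_mono) auto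
      moreover have "k*(-s) > 0" using sn k mult_pos_pos[of k "-s"] by linarith
      ultimately have "(k*s + n) mod n = k*s + n" unfolding n_def using k
        by (intro mod_pos_pos_trivial) (auto simp: algebra_simps)
      moreover have "(k*s + n) mod n = (k*s) mod n" by simp
      ultimately have "(k*s) mod n = k*s + n" by simp
      moreover have "k*s + n = k*(s+q) + 1" unfolding n_def by (simp add: algebra_simps)
      ultimately have "(k*s) mod n = k*(s+q) + 1" by simp
      then show ?thesis using e s sn by (intro exI[of _ "s+q"]) auto
    qed
  qed
qed

lemma adj_mod:
  fixes q k x y :: int
  assumes q: "q \<ge> 1" and k: "k \<ge> 5" and y: "0 \<le> y" "y \<le> k*q"
  shows "G_adj q k x y \<longleftrightarrow> ((y - x) mod (k*q+1) = k*q \<or> (y - x) mod (k*q+1) = 1 \<or>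
     (\<exists>m j. 2\<le>m \<and> m\<le>k-1 \<and> 0\<le>j \<and> j\<le>q-1 \<and> (y - x) mod (k*q+1) = k*j+m))"
proof -
  define n where "n = k*q+1"
  have kq: "k*q \<ge> 5*1" using q k by (intro mult_mono) auto
  have eqv: "(y = z mod n) \<longleftrightarrow> (y - x) mod n = (z - x) mod n" for z
  proof -
    have "y mod n = y" unfolding n_def using y by (intro mod_pos_pos_trivial) auto
    then have "(y = z mod n) \<longleftrightarrow> y mod n = z mod n" by simp
    also have "\<dots> \<longleftrightarrow> n dvd (y - z)" by (simp add: mod_eq_dvd_iff)
    also have "\<dots> \<longleftrightarrow> (y - x) mod n = (z - x) mod n" by (simp add: mod_eq_dvd_iff)
    finally show ?thesis .
  qed
  have m1: "(x - 1 - x) mod n = k*q" unfolding n_def using kq by (simp add: zmod_minus1)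
  have p1: "(x + 1 - x) mod n = 1" unfolding n_def using kq by simp
  have pm: "(k*j+m) mod n = k*j+m" if "2\<le>m" "m\<le>k-1" "0\<le>j" "j\<le>q-1" for m j
  proof -
    have "k*j \<le> k*(q-1)" using that k by (intro mult_left_mono) auto
    moreover have "k*j \<ge> 0" using that k by simp
    ultimately show "(k*j+m) mod n = k*j+m" unfolding n_def using that
      by (intro mod_pos_pos_trivial) (auto simp: algebra_simps)
  qed
  have ex: "(\<exists>m j. 2\<le>m \<and> m\<le>k-1 \<and> 0\<le>j \<and> j\<le>q-1 \<and> y = (x + k*j + m) mod n)
     \<longleftrightarrow> (\<exists>m j. 2\<le>m \<and> m\<le>k-1 \<and> 0\<le>j \<and> j\<le>q-1 \<and> (y - x) mod n = k*j+m)"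
  proof
    assume "\<exists>m j. 2\<le>m \<and> m\<le>k-1 \<and> 0\<le>j \<and> j\<le>q-1 \<and> y = (x + k*j + m) mod n"
    then obtain m j where mj: "2\<le>m" "m\<le>k-1" "0\<le>j" "j\<le>q-1" "y = (x + k*j + m) mod n" by blast
    then have "(y - x) mod n = k*j+m" using eqv pm by simp
    then show "\<exists>m j. 2\<le>m \<and> m\<le>k-1 \<and> 0\<le>j \<and> j\<le>q-1 \<and> (y - x) mod n = k*j+m" using mj by blast
  next
    assume "\<exists>m j. 2\<le>m \<and> m\<le>k-1 \<and> 0\<le>j \<and> j\<le>q-1 \<and> (y - x) mod n = k*j+m"
    then obtain m j where mj: "2\<le>m" "m\<le>k-1" "0\<le>j" "j\<le>q-1" "(y - x) mod n = k*j+m" by blast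
    then have "y = (x + k*j + m) mod n" using eqv pm by simp
    then show "\<exists>m j. 2\<le>m \<and> m\<le>k-1 \<and> 0\<le>j \<and> j\<le>q-1 \<and> y = (x + k*j + m) mod n" using mj by blast
  qed
  show ?thesis unfolding G_adj_def n_def[symmetric] ex
    using eqv m1 p1 by simp
qed

lemma key:
  fixes q k x y :: int
  assumes q: "q \<ge> 1" and k: "k \<ge> 5" and x: "0 \<le> x" "x \<le> k*q"
    and y: "0 \<le> y" "y \<le> k*q" and xy: "x \<noteq> y"
  shows "\<not> G_adj q k x y \<longleftrightarrow> (\<exists>s. s \<noteq> 0 \<and> \<bar>s\<bar> \<le> q-1 \<and> (k*q+1) dvd (y - x - k*s))"
proof -
  define r where "r = (y - x) mod (k*q+1)"
  have kq: "k*q \<ge> 5*1" using q k by (intro mult_mono) auto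
  have r1: "0 \<le> r" "r < k*q+1" unfolding r_def
    using kq pos_mod_bound[of "k*q+1" "y-x"] pos_mod_sign[of "k*q+1" "y-x"] by linarith+
  have "r \<noteq> 0"
  proof
    assume "r = 0"
    then have "(k*q+1) dvd (y - x)" unfolding r_def by (simp add: dvd_eq_mod_eq_0)
    then have "y - x = 0" using x y by (intro dvd_small_zero[of "k*q+1"]) auto
    then show False using xy by simp
  qed
  then have r2: "0 < r" using r1 by simp
  have "G_adj q k x y \<longleftrightarrow> (r = k*q \<or> r = 1 \<or> (\<exists>m j. 2\<le>m \<and> m\<le>k-1 \<and> 0\<le>j \<and> j\<le>q-1 \<and> r = k*j+m))"
    unfolding r_def using adj_mod[OF q k y] by simp
  also have "\<dots> \<longleftrightarrow> \<not>(\<exists>j. 1\<le>j \<and> j\<le>q-1 \<and> (r = k*j \<or> r = k*j+1))"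
    using resid[OF q k r2 r1(2)] .
  finally have "G_adj q k x y \<longleftrightarrow> \<not>(\<exists>j. 1\<le>j \<and> j\<le>q-1 \<and> (r = k*j \<or> r = k*j+1))" .
  then have "\<not> G_adj q k x y \<longleftrightarrow> (\<exists>j. 1\<le>j \<and> j\<le>q-1 \<and> (r = k*j \<or> r = k*j+1))" by blast
  also have "\<dots> \<longleftrightarrow> (\<exists>s. s \<noteq> 0 \<and> \<bar>s\<bar> \<le> q-1 \<and> (k*q+1) dvd (y - x - k*s))"
    unfolding r_def using dstep[OF q k, of "y - x"] .
  finally show ?thesis .
qed

lemma far:
  fixes q k x y t :: int
  assumes q: "q \<ge> 1" and k: "k \<ge> 5" and x: "0 \<le> x" "x \<le> k*q"
    and y: "0 \<le> y" "y \<le> k*q" and xy: "x \<noteq> y" and adj: "G_adj q k x y"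
    and dv: "(k*q+1) dvd (y - x - k*t)"
  shows "\<bar>t\<bar> \<ge> q"
proof (rule ccontr)
  assume "\<not> \<bar>t\<bar> \<ge> q"
  then have t: "\<bar>t\<bar> \<le> q - 1" by simp
  show False
  proof (cases "t = 0")
    case True
    then have "y - x = 0" using x y dv by (intro dvd_small_zero[of "k*q+1"]) auto
    then show False using xy by simp
  next
    case False
    then show False using key[OF q k x y xy] adj t dv by blast
  qed
qed

lemma same_sign:
  fixes q a b :: int
  assumes "\<bar>a\<bar> \<le> q-1" "\<bar>b\<bar> \<le> q-1" "\<bar>a+b\<bar> \<ge> q"
  shows "a > 0 \<longleftrightarrow> b > 0"
  using assms by (cases "a > 0"; cases "b > 0"; cases "a + b \<ge> 0") auto

lemma final_arith:
  fixes q s0 s1 s2 s3 s4 :: int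
  assumes "s0 \<noteq> 0" "s1 \<noteq> 0" "s2 \<noteq> 0" "s3 \<noteq> 0" "s4 \<noteq> 0"
    "\<bar>s0\<bar> \<le> q-1" "\<bar>s1\<bar> \<le> q-1" "\<bar>s2\<bar> \<le> q-1" "\<bar>s3\<bar> \<le> q-1" "\<bar>s4\<bar> \<le> q-1"
    "s0+s1+s2+s3+s4 = 0"
    "\<bar>s0+s1\<bar> \<ge> q" "\<bar>s1+s2\<bar> \<ge> q" "\<bar>s2+s3\<bar> \<ge> q" "\<bar>s3+s4\<bar> \<ge> q" "\<bar>s4+s0\<bar> \<ge> q"
  shows False
proof -
  have a: "(s0 > 0 \<longleftrightarrow> s1 > 0)" using same_sign assms(6,7,12) by blast
  have b: "(s1 > 0 \<longleftrightarrow> s2 > 0)" using same_sign assms(7,8,13) by blast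
  have c: "(s2 > 0 \<longleftrightarrow> s3 > 0)" using same_sign assms(8,9,14) by blast
  have d: "(s3 > 0 \<longleftrightarrow> s4 > 0)" using same_sign assms(9,10,15) by blast
  show False
  proof (cases "s0 > 0")
    case True
    then show False using a b c d assms(11) by linarith
  next
    case False
    then have "s0 < 0" using assms(1) by simp
    then show False using a b c d assms(1-5,11) by linarith
  qed
qed

theorem lemma2p5:
  fixes q k :: int
  assumes "q \<ge> 1" and "k \<ge> 5"
  shows "C5_free (G_verts q k) (G_adj q k)"
proof -
  note q = assms(1) and k = assms(2)
  define n where "n = k*q+1"
  {
    fix f :: "nat \<Rightarrow> int"
    assume inj: "inj_on f {0..<5}" and rng: "f ` {0..<5} \<subseteq> G_verts q k"
      and E: "\<forall>i<5. \<forall>j<5. i \<noteq> j \<longrightarrow>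
            (G_adj q k (f i) (f j) \<longleftrightarrow> (j = (i + 1) mod 5 \<or> i = (j + 1) mod 5))"
    define a0 where "a0 = f 0"
    define a1 where "a1 = f 2"
    define a2 where "a2 = f 4"
    define a3 where "a3 = f 1"
    define a4 where "a4 = f 3"
    have R: "0 \<le> f i \<and> f i \<le> k*q" if "i < 5" for i
    proof -
      have "f i \<in> f ` {0..<5}" using that by simp
      then have "f i \<in> G_verts q k" using rng by blast
      then show ?thesis unfolding G_verts_def by simp
    qed
    have r0: "0 \<le> a0" "a0 \<le> k*q" using R[of 0] unfolding a0_def by auto
    have r1: "0 \<le> a1" "a1 \<le> k*q" using R[of 2] unfolding a1_def by auto
    have r2: "0 \<le> a2" "a2 \<le> k*q" using R[of 4] unfolding a2_def by auto
    have r3: "0 \<le> a3" "a3 \<le> k*q" using R[of 1] unfolding a3_def by auto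
    have r4: "0 \<le> a4" "a4 \<le> k*q" using R[of 3] unfolding a4_def by auto
    have D: "f i \<noteq> f j" if "i < 5" "j < 5" "i \<noteq> j" for i j
      using inj that unfolding inj_on_def by auto
    have d01: "a0 \<noteq> a1" "a1 \<noteq> a0" using D[of 0 2] unfolding a0_def a1_def by auto
    have d12: "a1 \<noteq> a2" "a2 \<noteq> a1" using D[of 2 4] unfolding a1_def a2_def by auto
    have d23: "a2 \<noteq> a3" "a3 \<noteq> a2" using D[of 4 1] unfolding a2_def a3_def by auto
    have d34: "a3 \<noteq> a4" "a4 \<noteq> a3" using D[of 1 3] unfolding a3_def a4_def by auto
    have d40: "a4 \<noteq> a0" "a0 \<noteq> a4" using D[of 3 0] unfolding a4_def a0_def by auto
    have d02: "a0 \<noteq> a2" using D[of 0 4] unfolding a0_def a2_def by auto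
    have d13: "a1 \<noteq> a3" using D[of 2 1] unfolding a1_def a3_def by auto
    have d24: "a2 \<noteq> a4" using D[of 4 3] unfolding a2_def a4_def by auto
    have d30: "a3 \<noteq> a0" using D[of 1 0] unfolding a3_def a0_def by auto
    have d41: "a4 \<noteq> a1" using D[of 3 2] unfolding a4_def a1_def by auto
    have n01: "\<not> G_adj q k a0 a1" using E[rule_format, of 0 2] unfolding a0_def a1_def by simp
    have n12: "\<not> G_adj q k a1 a2" using E[rule_format, of 2 4] unfolding a1_def a2_def by simp
    have n23: "\<not> G_adj q k a2 a3" using E[rule_format, of 4 1] unfolding a2_def a3_def by simp
    have n34: "\<not> G_adj q k a3 a4" using E[rule_format, of 1 3] unfolding a3_def a4_def by simp
    have n40: "\<not> G_adj q k a4 a0" using E[rule_format, of 3 0] unfolding a4_def a0_def by simp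
    have e02: "G_adj q k a0 a2" using E[rule_format, of 0 4] unfolding a0_def a2_def by simp
    have e13: "G_adj q k a1 a3" using E[rule_format, of 2 1] unfolding a1_def a3_def by simp
    have e24: "G_adj q k a2 a4" using E[rule_format, of 4 3] unfolding a2_def a4_def by simp
    have e30: "G_adj q k a3 a0" using E[rule_format, of 1 0] unfolding a3_def a0_def by simp
    have e41: "G_adj q k a4 a1" using E[rule_format, of 3 2] unfolding a4_def a1_def by simp
    obtain s0 where s0: "s0 \<noteq> 0" "\<bar>s0\<bar> \<le> q-1" "n dvd (a1 - a0 - k*s0)"
      using key[OF q k r0 r1 d01(1)] n01 unfolding n_def by blast
    obtain s1 where s1: "s1 \<noteq> 0" "\<bar>s1\<bar> \<le> q-1" "n dvd (a2 - a1 - k*s1)"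
      using key[OF q k r1 r2 d12(1)] n12 unfolding n_def by blast
    obtain s2 where s2: "s2 \<noteq> 0" "\<bar>s2\<bar> \<le> q-1" "n dvd (a3 - a2 - k*s2)"
      using key[OF q k r2 r3 d23(1)] n23 unfolding n_def by blast
    obtain s3 where s3: "s3 \<noteq> 0" "\<bar>s3\<bar> \<le> q-1" "n dvd (a4 - a3 - k*s3)"
      using key[OF q k r3 r4 d34(1)] n34 unfolding n_def by blast
    obtain s4 where s4: "s4 \<noteq> 0" "\<bar>s4\<bar> \<le> q-1" "n dvd (a0 - a4 - k*s4)"
      using key[OF q k r4 r0 d40(1)] n40 unfolding n_def by blast
    define T where "T = s0+s1+s2+s3+s4"
    have "n dvd ((a1 - a0 - k*s0) + (a2 - a1 - k*s1) + (a3 - a2 - k*s2) + (a4 - a3 - k*s3) + (a0 - a4 - k*s4))"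
      using s0 s1 s2 s3 s4 by (intro dvd_add) auto
    moreover have "(a1 - a0 - k*s0) + (a2 - a1 - k*s1) + (a3 - a2 - k*s2) + (a4 - a3 - k*s3) + (a0 - a4 - k*s4) = - (k*T)"
      unfolding T_def by (simp add: algebra_simps)
    ultimately have "n dvd k*T" by simp
    then have "n dvd q*(k*T)" by simp
    moreover have "q*(k*T) = n*T - T" unfolding n_def by (simp add: algebra_simps)
    ultimately have "n dvd n*T - T" by simp
    then have "n dvd n*T - (n*T - T)" using dvd_diff[OF dvd_triv_left[of n T]] by blast
    then have "n dvd T" by simp
    moreover have "\<bar>T\<bar> < n"
    proof -
      have "\<bar>s0\<bar> \<le> q-1" "\<bar>s1\<bar> \<le> q-1" "\<bar>s2\<bar> \<le> q-1" "\<bar>s3\<bar> \<le> q-1" "\<bar>s4\<bar> \<le> q-1"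
        using s0 s1 s2 s3 s4 by auto
      then have B: "s0 \<le> q-1" "-s0 \<le> q-1" "s1 \<le> q-1" "-s1 \<le> q-1" "s2 \<le> q-1" "-s2 \<le> q-1"
          "s3 \<le> q-1" "-s3 \<le> q-1" "s4 \<le> q-1" "-s4 \<le> q-1" unfolding abs_le_iff by auto
      have "T \<le> 5*q-5" unfolding T_def using B by linarith
      moreover have "-T \<le> 5*q-5" unfolding T_def using B by linarith
      ultimately have "\<bar>T\<bar> \<le> 5*q-5" by linarith
      moreover have "k*q \<ge> 5*q" using q k by (intro mult_right_mono) auto
      ultimately show ?thesis unfolding n_def by linarith
    qed
    ultimately have T0: "T = 0" by (rule dvd_small_zero)
    have "n dvd (a2 - a0 - k*(s0+s1))" using dvd_add[OF s0(3) s1(3)] by (simp add: algebra_simps)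
    then have f1: "\<bar>s0+s1\<bar> \<ge> q" using far[OF q k r0 r2 d02 e02] unfolding n_def by blast
    have "n dvd (a3 - a1 - k*(s1+s2))" using dvd_add[OF s1(3) s2(3)] by (simp add: algebra_simps)
    then have f2: "\<bar>s1+s2\<bar> \<ge> q" using far[OF q k r1 r3 d13 e13] unfolding n_def by blast
    have "n dvd (a4 - a2 - k*(s2+s3))" using dvd_add[OF s2(3) s3(3)] by (simp add: algebra_simps)
    then have f3: "\<bar>s2+s3\<bar> \<ge> q" using far[OF q k r2 r4 d24 e24] unfolding n_def by blast
    have "n dvd (a0 - a3 - k*(s3+s4))" using dvd_add[OF s3(3) s4(3)] by (simp add: algebra_simps)
    then have f4: "\<bar>s3+s4\<bar> \<ge> q" using far[OF q k r3 r0 d30 e30] unfolding n_def by blast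
    have "n dvd (a1 - a4 - k*(s4+s0))" using dvd_add[OF s4(3) s0(3)] by (simp add: algebra_simps)
    then have f5: "\<bar>s4+s0\<bar> \<ge> q" using far[OF q k r4 r1 d41 e41] unfolding n_def by blast
    have False
      using final_arith[of s0 s1 s2 s3 s4 q] s0 s1 s2 s3 s4 T0 f1 f2 f3 f4 f5 unfolding T_def by blast
  }
  then show ?thesis unfolding C5_free_def has_induced_C5_def by blast
qed

end
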